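(* Let $\mathbb{F}\in\{\mathbb{R},\mathbb{C}\}$, $M>N\ge1$, $M\ge 2$, and let $\mathcal{P}(M,N)$ be the set of Parseval frames for $\mathbb{F}^N$ with $M$ vectors. For $\Phi=\{\varphi_i\}_{i=1}^M\in\mathcal{P}(M,N)$ define $$EAD(\Phi)=\sum_{i=1}^M\Big(\|\varphi_i\|^2-\frac{N}{M}\Big)^2+\sum_{i\neq j}\big(|\langle\varphi_i,\varphi_j\rangle|-c_{M,N}\big)^2,\qquad c_{M,N}=\sqrt{\frac{N(M-N)}{M^2(M-1)}},$$ $$V(\Phi)=\sum_{i=1}^M\Big(\|\varphi_i\|^2-\frac{N}{M}\Big)^2+\sum_{i\neq j}\big(|\langle\varphi_i,\varphi_j\rangle|-c_\Phi\big)^2,\qquad c_\Phi=\frac{TC(\Phi)}{M(M-1)}.$$ Then the following three optimization problems have the same set of solutions: maximizing $TC(\Phi)$ over $\mathcal{P}(M,N)$; minimizing $EAD(\Phi)$ over $\mathcal{P}(M,N)$; minimizing $V(\Phi)$ over $\mathcal{P}(M,N)$.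
   Context: A Parseval frame for $\mathbb{F}^N$ is a family $\{\varphi_i\}_{i=1}^M\subseteq\mathbb{F}^N$ whose $N\times M$ matrix $\Phi$ (columns $\varphi_i$) satisfies $\Phi\Phi^*=I$. The total coherence is $TC(\Phi)=\sum_{i\neq j}|\langle\varphi_i,\varphi_j\rangle|$. *)

theory Defs
  imports Complex_Main
begin

text \<open>A family of M vectors in F^N (F = R or C) is encoded as the N x M matrix
  Phi :: nat => nat => complex, where Phi k i is the k-th coordinate of the i-th
  frame vector (k < N, i < M); entries outside this range are 0. The real case is
  the case where all entries lie in the set of reals.\<close>

definition frame_inner :: "nat \<Rightarrow> (nat \<Rightarrow> nat \<Rightarrow> complex) \<Rightarrow> nat \<Rightarrow> nat \<Rightarrow> complex" where
  "frame_inner N Phi i j = (\<Sum>k<N. Phi k i * cnj (Phi k j))"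

definition frame_normsq :: "nat \<Rightarrow> (nat \<Rightarrow> nat \<Rightarrow> complex) \<Rightarrow> nat \<Rightarrow> real" where
  "frame_normsq N Phi i = (\<Sum>k<N. (cmod (Phi k i))\<^sup>2)"

definition parseval_frames :: "complex set \<Rightarrow> nat \<Rightarrow> nat \<Rightarrow> (nat \<Rightarrow> nat \<Rightarrow> complex) set" where
  "parseval_frames F M N = {Phi.
     (\<forall>k i. k < N \<and> i < M \<longrightarrow> Phi k i \<in> F) \<and>
     (\<forall>k i. \<not> (k < N \<and> i < M) \<longrightarrow> Phi k i = 0) \<and>
     (\<forall>k l. k < N \<and> l < N \<longrightarrow>
        (\<Sum>i<M. Phi k i * cnj (Phi l i)) = (if k = l then 1 else 0))}"

definition total_coherence :: "nat \<Rightarrow> nat \<Rightarrow> (nat \<Rightarrow> nat \<Rightarrow> complex) \<Rightarrow> real" where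
  "total_coherence M N Phi = (\<Sum>i<M. \<Sum>j\<in>{..<M} - {i}. cmod (frame_inner N Phi i j))"

definition c_MN :: "nat \<Rightarrow> nat \<Rightarrow> real" where
  "c_MN M N = sqrt ((real N * (real M - real N)) / ((real M)\<^sup>2 * (real M - 1)))"

definition EAD :: "nat \<Rightarrow> nat \<Rightarrow> (nat \<Rightarrow> nat \<Rightarrow> complex) \<Rightarrow> real" where
  "EAD M N Phi = (\<Sum>i<M. (frame_normsq N Phi i - real N / real M)\<^sup>2)
     + (\<Sum>i<M. \<Sum>j\<in>{..<M} - {i}. (cmod (frame_inner N Phi i j) - c_MN M N)\<^sup>2)"

definition c_Phi :: "nat \<Rightarrow> nat \<Rightarrow> (nat \<Rightarrow> nat \<Rightarrow> complex) \<Rightarrow> real" where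
  "c_Phi M N Phi = total_coherence M N Phi / (real M * (real M - 1))"

definition Vfun :: "nat \<Rightarrow> nat \<Rightarrow> (nat \<Rightarrow> nat \<Rightarrow> complex) \<Rightarrow> real" where
  "Vfun M N Phi = (\<Sum>i<M. (frame_normsq N Phi i - real N / real M)\<^sup>2)
     + (\<Sum>i<M. \<Sum>j\<in>{..<M} - {i}. (cmod (frame_inner N Phi i j) - c_Phi M N Phi)\<^sup>2)"

definition maximizers :: "('a \<Rightarrow> real) \<Rightarrow> 'a set \<Rightarrow> 'a set" where
  "maximizers f S = {x \<in> S. \<forall>y\<in>S. f y \<le> f x}"

definition minimizers :: "('a \<Rightarrow> real) \<Rightarrow> 'a set \<Rightarrow> 'a set" where
  "minimizers f S = {x \<in> S. \<forall>y\<in>S. f x \<le> f y}"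

end

theory Submission
  imports Defs
begin

lemma pf_orth:
  assumes "Phi \<in> parseval_frames F M N" "k < N" "l < N"
  shows "(\<Sum>i<M. Phi k i * cnj (Phi l i)) = (if k = l then 1 else 0)"
  using assms unfolding parseval_frames_def by blast

lemma normsq_eq: "frame_normsq N Phi i = cmod (frame_inner N Phi i i)"
proof -
  have "frame_inner N Phi i i = complex_of_real (frame_normsq N Phi i)"
    unfolding frame_inner_def frame_normsq_def
    by (simp only: of_real_sum complex_norm_square)
  moreover have "frame_normsq N Phi i \<ge> 0" unfolding frame_normsq_def
    by (simp add: sum_nonneg)
  ultimately show ?thesis by simp
qed

lemma sum_normsq:
  assumes "Phi \<in> parseval_frames F M N"
  shows "(\<Sum>i<M. frame_normsq N Phi i) = real N"
proof -
  have "complex_of_real (\<Sum>i<M. frame_normsq N Phi i)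
      = (\<Sum>k<N. \<Sum>i<M. Phi k i * cnj (Phi k i))"
    unfolding frame_normsq_def of_real_sum complex_norm_square by (rule sum.swap)
  also have "\<dots> = (\<Sum>k<N. 1)"
    by (rule sum.cong) (auto simp: pf_orth[OF assms])
  finally show ?thesis by (metis of_real_eq_iff of_real_of_nat_eq sum_constant mult_1_right card_lessThan)
qed

lemma reorder4:
  "(\<Sum>i\<in>A. \<Sum>j\<in>B. \<Sum>k\<in>C. \<Sum>l\<in>D. f i j k l)
   = (\<Sum>k\<in>C. \<Sum>l\<in>D. \<Sum>i\<in>A. \<Sum>j\<in>B. (f i j k l :: 'a :: comm_monoid_add))"
proof -
  have "(\<Sum>i\<in>A. \<Sum>j\<in>B. \<Sum>k\<in>C. \<Sum>l\<in>D. f i j k l)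
      = (\<Sum>i\<in>A. \<Sum>k\<in>C. \<Sum>l\<in>D. \<Sum>j\<in>B. f i j k l)"
    by (rule sum.cong[OF refl], subst sum.swap, rule sum.cong[OF refl], rule sum.swap)
  also have "\<dots> = (\<Sum>k\<in>C. \<Sum>l\<in>D. \<Sum>i\<in>A. \<Sum>j\<in>B. f i j k l)"
    by (subst sum.swap, rule sum.cong[OF refl], rule sum.swap)
  finally show ?thesis .
qed

lemma sum_sq_inner:
  assumes "Phi \<in> parseval_frames F M N"
  shows "(\<Sum>i<M. \<Sum>j<M. (cmod (frame_inner N Phi i j))\<^sup>2) = real N"
proof -
  have "complex_of_real (\<Sum>i<M. \<Sum>j<M. (cmod (frame_inner N Phi i j))\<^sup>2)
      = (\<Sum>i<M. \<Sum>j<M. frame_inner N Phi i j * cnj (frame_inner N Phi i j))"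
    by (simp only: of_real_sum complex_norm_square)
  also have "\<dots> = (\<Sum>i<M. \<Sum>j<M. \<Sum>k<N. \<Sum>l<N.
        (Phi k i * cnj (Phi l i)) * (cnj (Phi k j) * Phi l j))"
    unfolding frame_inner_def
    apply (simp add: sum_product sum_distrib_left sum_distrib_right mult_ac)
    apply (rule sum.cong[OF refl])
    apply (rule sum.cong[OF refl])
    apply (subst sum.swap)
    by (simp add: mult_ac)
  also have "\<dots> = (\<Sum>k<N. \<Sum>l<N. \<Sum>i<M. \<Sum>j<M.
        (Phi k i * cnj (Phi l i)) * (cnj (Phi k j) * Phi l j))"
    by (rule reorder4)
  also have "\<dots> = (\<Sum>k<N. \<Sum>l<N. (\<Sum>i<M. Phi k i * cnj (Phi l i)) *
        (\<Sum>j<M. cnj (Phi k j) * Phi l j))"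
    by (simp only: sum_product)
  also have "\<dots> = (\<Sum>k<N. \<Sum>l<N. (\<Sum>i<M. Phi k i * cnj (Phi l i)) *
        cnj (\<Sum>j<M. Phi k j * cnj (Phi l j)))"
    by (simp add: mult_ac)
  also have "\<dots> = (\<Sum>k<N. \<Sum>l<N. if k = l then 1 else 0)"
    by (intro sum.cong refl) (simp add: pf_orth[OF assms])
  also have "\<dots> = of_nat N" by simp
  finally show ?thesis by (metis of_real_eq_iff of_real_of_nat_eq)
qed


lemma sum_offdiag:
  fixes g :: "nat \<Rightarrow> nat \<Rightarrow> real"
  shows "(\<Sum>i<M. \<Sum>j\<in>{..<M} - {i}. g i j) = (\<Sum>i<M. \<Sum>j<M. g i j) - (\<Sum>i<M. g i i)"
proof -
  have "(\<Sum>i<M. \<Sum>j<M. g i j) = (\<Sum>i<M. g i i + (\<Sum>j\<in>{..<M} - {i}. g i j))"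
    by (rule sum.cong[OF refl]) (simp add: sum.remove)
  thus ?thesis by (simp add: sum.distrib)
qed

lemma expand:
  assumes P: "Phi \<in> parseval_frames F M N" and M1: "M \<ge> 1"
  shows "(\<Sum>i<M. (frame_normsq N Phi i - real N / real M)\<^sup>2)
     + (\<Sum>i<M. \<Sum>j\<in>{..<M} - {i}. (cmod (frame_inner N Phi i j) - c)\<^sup>2)
     = real N - (real N)\<^sup>2 / real M - 2 * c * total_coherence M N Phi
       + real M * (real M - 1) * c\<^sup>2"
proof -
  define a where "a i j = cmod (frame_inner N Phi i j)" for i j
  define n where "n i = frame_normsq N Phi i" for i
  have nd: "n i = a i i" for i by (simp add: n_def a_def normsq_eq)
  have sn: "(\<Sum>i<M. n i) = real N" using sum_normsq[OF P] by (simp add: n_def)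
  have sa: "(\<Sum>i<M. \<Sum>j<M. (a i j)\<^sup>2) = real N" using sum_sq_inner[OF P] by (simp add: a_def)
  have tc: "total_coherence M N Phi = (\<Sum>i<M. \<Sum>j\<in>{..<M} - {i}. a i j)"
    by (simp add: total_coherence_def a_def)
  have Mr: "real M > 0" using M1 by simp
  have e1: "(\<Sum>i<M. (n i - real N / real M)\<^sup>2)
      = (\<Sum>i<M. (n i)\<^sup>2) - 2 * (real N / real M) * (\<Sum>i<M. n i) + real M * (real N / real M)\<^sup>2"
    by (simp add: power2_diff sum.distrib sum_subtractf sum_distrib_left sum_divide_distrib mult_ac)
  have e1': "(\<Sum>i<M. (n i - real N / real M)\<^sup>2) = (\<Sum>i<M. (n i)\<^sup>2) - (real N)\<^sup>2 / real M"
    unfolding e1 sn using Mr by (simp add: field_simps power2_eq_square)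
  have cardi: "card ({..<M} - {i}) = M - 1" if "i < M" for i using that by simp
  have e2: "(\<Sum>i<M. \<Sum>j\<in>{..<M} - {i}. (a i j - c)\<^sup>2)
     = (\<Sum>i<M. \<Sum>j\<in>{..<M} - {i}. (a i j)\<^sup>2) - 2 * c * (\<Sum>i<M. \<Sum>j\<in>{..<M} - {i}. a i j)
       + (\<Sum>i<M. \<Sum>j\<in>{..<M} - {i}. c\<^sup>2)"
    by (simp add: power2_diff sum.distrib sum_subtractf sum_distrib_left mult_ac)
  have e3: "(\<Sum>i<M. \<Sum>j\<in>{..<M} - {i}. c\<^sup>2) = real M * (real M - 1) * c\<^sup>2"
  proof -
    have "(\<Sum>i<M. \<Sum>j\<in>{..<M} - {i}. c\<^sup>2) = (\<Sum>i<M. real (M - 1) * c\<^sup>2)"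
      by (rule sum.cong[OF refl]) (simp add: cardi)
    thus ?thesis using M1 by (simp add: of_nat_diff)
  qed
  have e4: "(\<Sum>i<M. \<Sum>j\<in>{..<M} - {i}. (a i j)\<^sup>2) = real N - (\<Sum>i<M. (n i)\<^sup>2)"
    by (simp add: sum_offdiag sa nd)
  show ?thesis
    unfolding n_def[symmetric] a_def[symmetric] e1' e2 e3 e4 tc by simp
qed

lemma tc_nonneg: "total_coherence M N Phi \<ge> 0"
  unfolding total_coherence_def by (intro sum_nonneg) auto

theorem proposition5:
  fixes F :: "complex set" and M N :: nat
  assumes "F = \<real> \<or> F = UNIV"
    and "M > N" and "N \<ge> 1" and "M \<ge> 2"
  shows "maximizers (total_coherence M N) (parseval_frames F M N)
           = minimizers (EAD M N) (parseval_frames F M N)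
       \<and> maximizers (total_coherence M N) (parseval_frames F M N)
           = minimizers (Vfun M N) (parseval_frames F M N)"
proof -
  let ?S = "parseval_frames F M N"
  let ?T = "total_coherence M N"
  define K where "K = real N - (real N)\<^sup>2 / real M"
  define c where "c = c_MN M N"
  have M1: "M \<ge> 1" using assms by simp
  have Mpos: "real M * (real M - 1) > 0" using assms by simp
  have cpos: "c > 0" unfolding c_def c_MN_def using assms by (simp add: of_nat_diff)
  have EADe: "EAD M N Phi = K + real M * (real M - 1) * c\<^sup>2 - 2 * c * ?T Phi"
    if "Phi \<in> ?S" for Phi
    using expand[OF that M1, of c] unfolding EAD_def K_def c_def by simp
  have Ve: "Vfun M N Phi = K - (?T Phi)\<^sup>2 / (real M * (real M - 1))"
    if "Phi \<in> ?S" for Phi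
  proof -
    have "Vfun M N Phi = K - 2 * c_Phi M N Phi * ?T Phi + real M * (real M - 1) * (c_Phi M N Phi)\<^sup>2"
      using expand[OF that M1, of "c_Phi M N Phi"] unfolding Vfun_def K_def by simp
    moreover have "2 * (t / D) * t - D * (t / D)\<^sup>2 = t\<^sup>2 / D" if "D > 0" for t D :: real
      using that by (simp add: power2_eq_square field_simps)
    ultimately show ?thesis unfolding c_Phi_def using Mpos
      by (smt (verit, ccfv_threshold))
  qed
  have A: "EAD M N x \<le> EAD M N y \<longleftrightarrow> ?T y \<le> ?T x" if "x \<in> ?S" "y \<in> ?S" for x y
    using EADe[OF that(1)] EADe[OF that(2)] cpos by (simp add: mult_le_cancel_left_pos)
  have B: "Vfun M N x \<le> Vfun M N y \<longleftrightarrow> ?T y \<le> ?T x" if "x \<in> ?S" "y \<in> ?S" for x y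
  proof -
    have "Vfun M N x \<le> Vfun M N y \<longleftrightarrow> (?T y)\<^sup>2 \<le> (?T x)\<^sup>2"
      using Ve[OF that(1)] Ve[OF that(2)] Mpos by (simp add: divide_right_mono divide_le_cancel)
    also have "\<dots> \<longleftrightarrow> ?T y \<le> ?T x"
      using tc_nonneg[of M N x] tc_nonneg[of M N y] by (simp add: power_mono_iff)
    finally show ?thesis .
  qed
  show ?thesis
    unfolding maximizers_def minimizers_def using A B by blast
qed

end
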